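(* Let $G$ be an infinite group acting on a set $X$ on the left, and let $\mathfrak{F}$ be a family of subsets of $X$ that is $G$-invariant and upward directed. Then $\mathfrak{F}$ is $\mathfrak{F}$-packing large if and only if, for every $A\in\mathfrak{F}$, the set $\Delta_{\mathfrak{F}}(A)=\{g\in G: gA\cap A\in\mathfrak{F}\}$ is a Ramsey $(-1,1)$-product subset of $G$.
   Context: $\mathfrak{F}$ is $G$-invariant if $A\in\mathfrak{F}$, $g\in G$ imply $gA\in\mathfrak{F}$; upward directed if $A\in\mathfrak{F}$, $A\subseteq C\subseteq X$ imply $C\in\mathfrak{F}$. (Under these assumptions $\{g: gB\subseteq A$ for some $B\in\mathfrak{F}, B\subseteq A\}=\{g: gA\cap A\in\mathfrak{F}\}$.) A family $\mathfrak{F}'$ of subsets of $X$ is $\mathfrak{F}$-disjoint if $A\cap B\notin\mathfrak{F}$ for all distinct $A,B\in\mathfrak{F}'$. A family $\mathfrak{F}'$ is $\mathfrak{F}$-packing large if for each $A\in\mathfrak{F}'$ every $\mathfrak{F}$-disjoint family of sets of the form $gA$, $g\in G$, is finite. A subset $R\subseteq G$ is a Ramsey $(-1,1)$-product subset if every infinite $Y\subseteq G$ contains distinct $y_1,y_2$ with $y_1^{-1}y_2\in R$ and $y_2^{-1}y_1\in R$. *)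

theory Defs
  imports "HOL-Algebra.Group_Action"
begin

definition G_invariant :: "('g, 'm) monoid_scheme \<Rightarrow> ('g \<Rightarrow> 'b \<Rightarrow> 'b) \<Rightarrow> 'b set set \<Rightarrow> bool" where
  "G_invariant G \<phi> F \<longleftrightarrow> (\<forall>A\<in>F. \<forall>g\<in>carrier G. \<phi> g ` A \<in> F)"

definition upward_directed :: "'b set \<Rightarrow> 'b set set \<Rightarrow> bool" where
  "upward_directed X F \<longleftrightarrow> (\<forall>A\<in>F. \<forall>C. A \<subseteq> C \<and> C \<subseteq> X \<longrightarrow> C \<in> F)"

definition F_disjoint :: "'b set set \<Rightarrow> 'b set set \<Rightarrow> bool" where
  "F_disjoint F F' \<longleftrightarrow> (\<forall>A\<in>F'. \<forall>B\<in>F'. A \<noteq> B \<longrightarrow> A \<inter> B \<notin> F)"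

definition F_packing_large ::
  "('g, 'm) monoid_scheme \<Rightarrow> ('g \<Rightarrow> 'b \<Rightarrow> 'b) \<Rightarrow> 'b set set \<Rightarrow> 'b set set \<Rightarrow> bool" where
  "F_packing_large G \<phi> F F' \<longleftrightarrow>
     (\<forall>A\<in>F'. \<forall>S. S \<subseteq> {\<phi> g ` A | g. g \<in> carrier G} \<and> F_disjoint F S \<longrightarrow> finite S)"

definition Delta_F ::
  "('g, 'm) monoid_scheme \<Rightarrow> ('g \<Rightarrow> 'b \<Rightarrow> 'b) \<Rightarrow> 'b set set \<Rightarrow> 'b set \<Rightarrow> 'g set" where
  "Delta_F G \<phi> F A = {g \<in> carrier G. \<phi> g ` A \<inter> A \<in> F}"

definition ramsey_m1_1_product :: "('g, 'm) monoid_scheme \<Rightarrow> 'g set \<Rightarrow> bool" where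
  "ramsey_m1_1_product G R \<longleftrightarrow>
     (\<forall>Y. Y \<subseteq> carrier G \<and> infinite Y \<longrightarrow>
        (\<exists>y1\<in>Y. \<exists>y2\<in>Y. y1 \<noteq> y2 \<and>
           inv\<^bsub>G\<^esub> y1 \<otimes>\<^bsub>G\<^esub> y2 \<in> R \<and> inv\<^bsub>G\<^esub> y2 \<otimes>\<^bsub>G\<^esub> y1 \<in> R))"

end

theory Submission
  imports Defs
begin

context group_action
begin

lemma grp: "group G"
  using group_hom group_hom.axioms(1) by blast

lemma img_comp:
  assumes "B \<subseteq> E" "g \<in> carrier G" "h \<in> carrier G"
  shows "\<phi> (g \<otimes> h) ` B = \<phi> g ` (\<phi> h ` B)"
proof -
  have "\<And>x. x \<in> B \<Longrightarrow> \<phi> (g \<otimes> h) x = \<phi> g (\<phi> h x)"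
    using assms composition_rule by blast
  then show ?thesis by (simp add: image_image cong: image_cong)
qed

lemma img_one:
  assumes "B \<subseteq> E"
  shows "\<phi> \<one> ` B = B"
proof -
  have "\<And>x. x \<in> E \<Longrightarrow> \<phi> \<one> x = x" using id_eq_one by (metis restrict_apply')
  then show ?thesis using assms by force
qed

lemma img_cancel:
  assumes "B \<subseteq> E" "g \<in> carrier G"
  shows "\<phi> g ` (\<phi> (inv g) ` B) = B"
proof -
  interpret group G by (rule grp)
  show ?thesis using img_comp[OF assms(1) assms(2) inv_closed[OF assms(2)]] img_one[OF assms(1)] assms
    by simp
qed

lemma img_int:
  assumes "A \<subseteq> E" "B \<subseteq> E" "g \<in> carrier G"
  shows "\<phi> g ` (A \<inter> B) = \<phi> g ` A \<inter> \<phi> g ` B"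
  using inj_prop[OF assms(3)] assms by (simp add: inj_on_image_Int)

lemma img_sub:
  assumes "A \<subseteq> E" "g \<in> carrier G"
  shows "\<phi> g ` A \<subseteq> E"
  using surj_prop[OF assms(2)] assms(1) by blast

lemma key:
  assumes "A \<subseteq> E" "g \<in> carrier G" "h \<in> carrier G"
    and inv: "\<forall>A\<in>F. \<forall>g\<in>carrier G. \<phi> g ` A \<in> F"
  shows "(\<phi> (inv g \<otimes> h) ` A \<inter> A \<in> F) \<longleftrightarrow> (\<phi> g ` A \<inter> \<phi> h ` A \<in> F)"
proof -
  interpret group G by (rule grp)
  have ig: "inv g \<in> carrier G" using assms by simp
  have hA: "\<phi> h ` A \<subseteq> E" "\<phi> g ` A \<subseteq> E" using img_sub assms by auto
  have e1: "\<phi> (inv g \<otimes> h) ` A = \<phi> (inv g) ` (\<phi> h ` A)"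
    using img_comp[OF assms(1) ig assms(3)] .
  have e2: "\<phi> (inv g) ` (\<phi> g ` A) = A"
    using img_comp[OF assms(1) ig assms(2)] img_one[OF assms(1)] assms by simp
  have e3: "\<phi> (inv g \<otimes> h) ` A \<inter> A = \<phi> (inv g) ` (\<phi> h ` A \<inter> \<phi> g ` A)"
    using e1 e2 img_int[OF hA ig] by simp
  have e4: "\<phi> g ` (\<phi> (inv g \<otimes> h) ` A \<inter> A) = \<phi> h ` A \<inter> \<phi> g ` A"
    unfolding e3 by (rule img_cancel) (use hA assms in auto)
  show ?thesis
  proof
    assume "\<phi> (inv g \<otimes> h) ` A \<inter> A \<in> F"
    then have "\<phi> g ` (\<phi> (inv g \<otimes> h) ` A \<inter> A) \<in> F" using inv assms by blast
    then show "\<phi> g ` A \<inter> \<phi> h ` A \<in> F" using e4 by (simp add: Int_commute)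
  next
    assume "\<phi> g ` A \<inter> \<phi> h ` A \<in> F"
    then have "\<phi> (inv g) ` (\<phi> h ` A \<inter> \<phi> g ` A) \<in> F" using inv ig by (simp add: Int_commute)
    then show "\<phi> (inv g \<otimes> h) ` A \<inter> A \<in> F" using e3 by simp
  qed
qed

end

theorem proposition5p6:
  fixes G (structure) and X :: "'b set" and \<phi> :: "'g \<Rightarrow> 'b \<Rightarrow> 'b" and F :: "'b set set"
  assumes "group_action G X \<phi>"
    and "infinite (carrier G)"
    and "F \<subseteq> Pow X"
    and "G_invariant G \<phi> F"
    and "upward_directed X F"
  shows "F_packing_large G \<phi> F F \<longleftrightarrow> (\<forall>A\<in>F. ramsey_m1_1_product G (Delta_F G \<phi> F A))"
proof -
  interpret group_action G X \<phi> by (rule assms(1))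
  interpret group G by (rule grp)
  have inv: "\<forall>A\<in>F. \<forall>g\<in>carrier G. \<phi> g ` A \<in> F" using assms(4) unfolding G_invariant_def .
  have D: "\<And>A g h. A \<in> F \<Longrightarrow> g \<in> carrier G \<Longrightarrow> h \<in> carrier G \<Longrightarrow>
     (inv g \<otimes> h \<in> Delta_F G \<phi> F A) \<longleftrightarrow> (\<phi> g ` A \<inter> \<phi> h ` A \<in> F)"
    unfolding Delta_F_def using key[OF _ _ _ inv] assms(3) by auto
  show ?thesis
  proof
    assume PL: "F_packing_large G \<phi> F F"
    show "\<forall>A\<in>F. ramsey_m1_1_product G (Delta_F G \<phi> F A)"
      unfolding ramsey_m1_1_product_def
    proof (intro ballI allI impI)
      fix A Y assume A: "A \<in> F" and Y: "Y \<subseteq> carrier G \<and> infinite Y"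
      show "\<exists>y1\<in>Y. \<exists>y2\<in>Y. y1 \<noteq> y2 \<and> inv y1 \<otimes> y2 \<in> Delta_F G \<phi> F A \<and> inv y2 \<otimes> y1 \<in> Delta_F G \<phi> F A"
      proof (rule ccontr)
        assume N: "\<not> ?thesis"
        have N': "\<And>y1 y2. y1 \<in> Y \<Longrightarrow> y2 \<in> Y \<Longrightarrow> y1 \<noteq> y2 \<Longrightarrow> \<phi> y1 ` A \<inter> \<phi> y2 ` A \<notin> F"
        proof -
          fix y1 y2 assume h: "y1 \<in> Y" "y2 \<in> Y" "y1 \<noteq> y2"
          show "\<phi> y1 ` A \<inter> \<phi> y2 ` A \<notin> F"
          proof
            assume "\<phi> y1 ` A \<inter> \<phi> y2 ` A \<in> F"
            then show False using N h Y D[OF A, of y1 y2] D[OF A, of y2 y1]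
              by (auto simp: Int_commute)
          qed
        qed
        have injY: "inj_on (\<lambda>y. \<phi> y ` A) Y"
        proof (rule inj_onI, rule ccontr)
          fix y1 y2 assume h: "y1 \<in> Y" "y2 \<in> Y" "\<phi> y1 ` A = \<phi> y2 ` A" "y1 \<noteq> y2"
          have "\<phi> y1 ` A \<in> F" using inv A h Y by blast
          then show False using N'[OF h(1,2,4)] h(3) by simp
        qed
        let ?S = "(\<lambda>y. \<phi> y ` A) ` Y"
        have "infinite ?S" using injY Y finite_imageD by blast
        moreover have "?S \<subseteq> {\<phi> g ` A | g. g \<in> carrier G}" using Y by blast
        moreover have "F_disjoint F ?S" unfolding F_disjoint_def using N' by blast
        ultimately show False using PL A unfolding F_packing_large_def by blast
      qed
    qed
  next
    assume R: "\<forall>A\<in>F. ramsey_m1_1_product G (Delta_F G \<phi> F A)"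
    show "F_packing_large G \<phi> F F"
      unfolding F_packing_large_def
    proof (intro ballI allI impI)
      fix A S assume A: "A \<in> F" and S: "S \<subseteq> {\<phi> g ` A | g. g \<in> carrier G} \<and> F_disjoint F S"
      show "finite S"
      proof (rule ccontr)
        assume inf: "infinite S"
        define f where "f s = (SOME g. g \<in> carrier G \<and> s = \<phi> g ` A)" for s
        have f: "\<And>s. s \<in> S \<Longrightarrow> f s \<in> carrier G \<and> s = \<phi> (f s) ` A"
          proof -
          fix s assume "s \<in> S"
          then have "\<exists>g. g \<in> carrier G \<and> s = \<phi> g ` A" using S by blast
          then show "f s \<in> carrier G \<and> s = \<phi> (f s) ` A" unfolding f_def by (rule someI_ex)
        qed
        have injf: "inj_on f S" by (rule inj_onI) (metis f)
        have Yi: "infinite (f ` S)" using inf injf finite_imageD by blast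
        have Ys: "f ` S \<subseteq> carrier G" using f by blast
        obtain y1 y2 where y: "y1 \<in> f ` S" "y2 \<in> f ` S" "y1 \<noteq> y2" "inv y1 \<otimes> y2 \<in> Delta_F G \<phi> F A"
        proof -
          have "ramsey_m1_1_product G (Delta_F G \<phi> F A)" using R A by blast
          then have "\<exists>y1\<in>f ` S. \<exists>y2\<in>f ` S. y1 \<noteq> y2 \<and> inv y1 \<otimes> y2 \<in> Delta_F G \<phi> F A \<and> inv y2 \<otimes> y1 \<in> Delta_F G \<phi> F A"
            unfolding ramsey_m1_1_product_def using Yi Ys by (elim allE[of _ "f ` S"]) (simp only: simp_thms)
          then show ?thesis using that by blast
        qed
        obtain s1 s2 where s: "s1 \<in> S" "s2 \<in> S" "y1 = f s1" "y2 = f s2" using y by blast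
        have "s1 \<noteq> s2" using s y(3) by blast
        have "s1 \<inter> s2 \<in> F"
        proof -
          have "y1 \<in> carrier G" "y2 \<in> carrier G" using y Ys by auto
          then have "\<phi> y1 ` A \<inter> \<phi> y2 ` A \<in> F" using D[OF A, of y1 y2] y(4) by simp
          moreover have "s1 = \<phi> y1 ` A" "s2 = \<phi> y2 ` A" using f s by auto
          ultimately show ?thesis by simp
        qed
        then show False using S s \<open>s1 \<noteq> s2\<close> unfolding F_disjoint_def by blast
      qed
    qed
  qed
qed

end
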